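(* For $i\in\{1,2\}$, let $G_i$ be a 2-edge-connected $(3,4)$-biregular $X_i,Y_i$-bigraph (vertices of $X_i$ of degree 3, of $Y_i$ of degree 4), with $G_1,G_2$ vertex-disjoint, having a $P_7$-factor $F_i$, and choose an edge $e_i=a_ib_i\in E(G_i)\setminus E(F_i)$ with $a_i\in X_i$, $b_i\in Y_i$. Let $G$ be the graph obtained from the disjoint union $G_1\cup G_2$ by deleting $e_1$ and $e_2$ and adding the edges $e_1'=a_1b_2$ and $e_2'=a_2b_1$, so that $G$ is a $(3,4)$-biregular $(X_1\cup X_2),(Y_1\cup Y_2)$-bigraph. If $G_1$ has no full 3-regular subgraph, then $G$ is a 2-edge-connected $(3,4)$-biregular bigraph having a $P_7$-factor but no full 3-regular subgraph.
   Context: Graphs may have multiple edges. An $X,Y$-bigraph is a bipartite graph with partite sets $X$ and $Y$. A $(3,4)$-biregular bigraph is a bipartite graph in which every vertex of one part has degree 3 and every vertex of the other part has degree 4. A $P_7$-factor is a spanning subgraph each of whose components is a path on 7 vertices. A full 3-regular subgraph of a $(3,4)$-biregular bigraph is a 3-regular subgraph that contains every vertex of degree 4. *)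

theory Defs
  imports Main "HOL-Library.Multiset"
begin

text \<open>Finite multigraphs: a vertex set V and a multiset E of edges; an edge is a pair
  of endpoints, read as unordered. In a bigraph every edge is stored as (x,y)
  with x in X and y in Y.\<close>

definition is_bigraph :: "'v set \<Rightarrow> 'v set \<Rightarrow> ('v \<times> 'v) multiset \<Rightarrow> bool" where
  "is_bigraph X Y E \<longleftrightarrow> finite X \<and> finite Y \<and> X \<inter> Y = {} \<and>
     (\<forall>e \<in># E. fst e \<in> X \<and> snd e \<in> Y)"

definition deg :: "('v \<times> 'v) multiset \<Rightarrow> 'v \<Rightarrow> nat" where
  "deg E v = size (filter_mset (\<lambda>e. fst e = v) E) + size (filter_mset (\<lambda>e. snd e = v) E)"

definition biregular34 :: "'v set \<Rightarrow> 'v set \<Rightarrow> ('v \<times> 'v) multiset \<Rightarrow> bool" where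
  "biregular34 X Y E \<longleftrightarrow> is_bigraph X Y E \<and>
     (\<forall>x\<in>X. deg E x = 3) \<and> (\<forall>y\<in>Y. deg E y = 4)"

definition adj_rel :: "('v \<times> 'v) multiset \<Rightarrow> ('v \<times> 'v) set" where
  "adj_rel E = set_mset E \<union> (set_mset E)\<inverse>"

definition reach :: "('v \<times> 'v) multiset \<Rightarrow> 'v \<Rightarrow> 'v \<Rightarrow> bool" where
  "reach E u v \<longleftrightarrow> (u, v) \<in> (adj_rel E)\<^sup>*"

definition connected_graph :: "'v set \<Rightarrow> ('v \<times> 'v) multiset \<Rightarrow> bool" where
  "connected_graph V E \<longleftrightarrow> V \<noteq> {} \<and> (\<forall>u\<in>V. \<forall>v\<in>V. reach E u v)"

definition two_edge_connected :: "'v set \<Rightarrow> ('v \<times> 'v) multiset \<Rightarrow> bool" where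
  "two_edge_connected V E \<longleftrightarrow> connected_graph V E \<and>
     (\<forall>e \<in># E. connected_graph V (E - {#e#}))"

definition component :: "'v set \<Rightarrow> ('v \<times> 'v) multiset \<Rightarrow> 'v \<Rightarrow> 'v set" where
  "component V F v = {u \<in> V. reach F v u}"

definition is_path_on :: "'v list \<Rightarrow> ('v \<times> 'v) multiset \<Rightarrow> bool" where
  "is_path_on p F \<longleftrightarrow> distinct p \<and>
     image_mset (\<lambda>(a, b). {a, b}) F =
       mset (map (\<lambda>i. {p ! i, p ! Suc i}) [0..<length p - 1])"

definition P7_factor :: "'v set \<Rightarrow> ('v \<times> 'v) multiset \<Rightarrow> ('v \<times> 'v) multiset \<Rightarrow> bool" where
  "P7_factor V E F \<longleftrightarrow> F \<subseteq># E \<and>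
     (\<forall>v\<in>V. \<exists>p. length p = 7 \<and> set p = component V F v \<and>
        is_path_on p (filter_mset (\<lambda>e. fst e \<in> component V F v) F))"

definition full_3reg_subgraph ::
  "'v set \<Rightarrow> 'v set \<Rightarrow> ('v \<times> 'v) multiset \<Rightarrow> 'v set \<Rightarrow> ('v \<times> 'v) multiset \<Rightarrow> bool" where
  "full_3reg_subgraph X Y E W H \<longleftrightarrow> W \<subseteq> X \<union> Y \<and> Y \<subseteq> W \<and> H \<subseteq># E \<and>
     (\<forall>e \<in># H. fst e \<in> W \<and> snd e \<in> W) \<and> (\<forall>w\<in>W. deg H w = 3)"

end

theory Submission imports Defs begin

lemma deg_add: "deg (A + B) v = deg A v + deg B v"
  by (simp add: deg_def)
lemma deg_add_mset: "deg (add_mset e M) v = deg M v + (if fst e = v then 1 else 0) + (if snd e = v then 1 else 0)"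
  by (simp add: deg_def)
lemma deg_zero: "(\<forall>e\<in>#M. fst e \<noteq> v \<and> snd e \<noteq> v) \<Longrightarrow> deg M v = 0"
  by (simp add: deg_def filter_mset_eq_mempty_iff)
lemma deg_diff: "e \<in># M \<Longrightarrow> deg (M - {#e#}) v = deg M v - (if fst e = v then 1 else 0) - (if snd e = v then 1 else 0)"
proof -
  assume "e \<in># M"
  then have "M = add_mset e (M - {#e#})" by simp
  then have "deg M v = deg (M - {#e#}) v + (if fst e = v then 1 else 0) + (if snd e = v then 1 else 0)"
    by (metis deg_add_mset)
  then show ?thesis by simp
qed

lemma adj_sym: "(adj_rel E)\<inverse> = adj_rel E" by (auto simp: adj_rel_def)
lemma reach_refl: "reach E u u" by (simp add: reach_def)
lemma reach_trans: "reach E u v \<Longrightarrow> reach E v w \<Longrightarrow> reach E u w"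
  unfolding reach_def by (rule rtrancl_trans)
lemma reach_sym: "reach E u v \<Longrightarrow> reach E v u"
  unfolding reach_def by (metis adj_sym rtrancl_converseI)
lemma reach_mono: "set_mset A \<subseteq> set_mset B \<Longrightarrow> reach A u v \<Longrightarrow> reach B u v"
  unfolding reach_def adj_rel_def by (erule rtrancl_mono[THEN subsetD, rotated]) auto
lemma reach_mono': "A \<subseteq># B \<Longrightarrow> reach A u v \<Longrightarrow> reach B u v"
  by (erule reach_mono[rotated]) (simp add: set_mset_mono)
lemma reach_edge: "(u,v) \<in># E \<Longrightarrow> reach E u v"
  unfolding reach_def adj_rel_def by auto
lemma reach_edge': "(u,v) \<in># E \<Longrightarrow> reach E v u"
  by (simp add: reach_edge reach_sym)

lemma reach_add_edge: "reach (D + {#(a,b)#}) u w \<Longrightarrow> reach D u w \<or> reach D u a \<or> reach D u b"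
  unfolding reach_def
proof (induction rule: rtrancl_induct)
  case base then show ?case by simp
next
  case (step y z)
  from step.IH show ?case
  proof (elim disjE)
    assume h: "(u, y) \<in> (adj_rel D)\<^sup>*"
    from step.hyps(2) have "(y,z) \<in> adj_rel D \<or> (y,z) = (a,b) \<or> (y,z) = (b,a)"
      by (auto simp: adj_rel_def)
    then show ?thesis using h by (auto intro: rtrancl_into_rtrancl)
  qed auto
qed

lemma reach_stay: "\<forall>e\<in>#A. fst e \<in> S \<and> snd e \<in> S \<Longrightarrow> v \<in> S \<Longrightarrow> reach A v u \<Longrightarrow> u \<in> S"
  unfolding reach_def
proof -
  assume A: "\<forall>e\<in>#A. fst e \<in> S \<and> snd e \<in> S" and v: "v \<in> S" and r: "(v,u) \<in> (adj_rel A)\<^sup>*"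
  from r show "u \<in> S"
    by (induction rule: rtrancl_induct) (use A v in \<open>auto simp: adj_rel_def\<close>)
qed

lemma reach_split:
  assumes A: "\<forall>e\<in>#A. fst e \<in> V1 \<and> snd e \<in> V1" and B: "\<forall>e\<in>#B. fst e \<in> V2 \<and> snd e \<in> V2"
    and d: "V1 \<inter> V2 = {}" and v: "v \<in> V1" and r: "reach (A + B) v u"
  shows "reach A v u"
proof -
  from r have "(v,u) \<in> (adj_rel (A+B))\<^sup>*" by (simp add: reach_def)
  then have "(v,u) \<in> (adj_rel A)\<^sup>* \<and> u \<in> V1"
  proof (induction rule: rtrancl_induct)
    case base then show ?case using v by simp
  next
    case (step y z)
    then have y: "y \<in> V1" "(v,y) \<in> (adj_rel A)\<^sup>*" by auto
    from step.hyps(2) have "(y,z) \<in> adj_rel A \<or> (y,z) \<in> adj_rel B" by (auto simp: adj_rel_def)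
    then show ?case
    proof
      assume "(y,z) \<in> adj_rel A"
      then show ?thesis using y A by (auto simp: adj_rel_def intro: rtrancl_into_rtrancl)
    next
      assume "(y,z) \<in> adj_rel B"
      then have "y \<in> V2" using B by (auto simp: adj_rel_def)
      then show ?thesis using y d by auto
    qed
  qed
  then show ?thesis by (simp add: reach_def)
qed

lemma conn_via: "V \<noteq> {} \<Longrightarrow> \<forall>u\<in>V. reach E u c \<Longrightarrow> connected_graph V E"
  unfolding connected_graph_def by (meson reach_sym reach_trans)

lemma conn_join:
  assumes "connected_graph V1 A" "connected_graph V2 B" "A \<subseteq># E" "B \<subseteq># E" "x \<in> V1" "y \<in> V2" "reach E x y"
  shows "connected_graph (V1 \<union> V2) E"
proof (rule conn_via[where c = y])
  show "V1 \<union> V2 \<noteq> {}" using assms by auto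
  show "\<forall>u\<in>V1 \<union> V2. reach E u y"
  proof
    fix u assume "u \<in> V1 \<union> V2"
    then show "reach E u y"
    proof
      assume "u \<in> V1"
      then have "reach A u x" using assms(1,5) by (auto simp: connected_graph_def)
      then show ?thesis using assms(3,7) reach_mono' reach_trans by metis
    next
      assume "u \<in> V2"
      then have "reach B u y" using assms(2,6) by (auto simp: connected_graph_def)
      then show ?thesis using assms(4) reach_mono' by metis
    qed
  qed
qed

lemma conn_key:
  assumes "connected_graph V1 (D + {#(a,b)#})" "connected_graph V2 B" "D \<subseteq># E" "B \<subseteq># E"
    "a \<in> V1" "p \<in> V2" "q \<in> V2" "reach E a p" "reach E q b"
  shows "connected_graph (V1 \<union> V2) E"
proof (rule conn_via[where c = b])
  show "V1 \<union> V2 \<noteq> {}" using assms by auto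
  have pq: "reach E p q" using assms(2,4,6,7) reach_mono' by (metis connected_graph_def)
  have ab: "reach E a b" using assms(8,9) pq reach_trans by metis
  show "\<forall>u\<in>V1 \<union> V2. reach E u b"
  proof
    fix u assume "u \<in> V1 \<union> V2"
    then show "reach E u b"
    proof
      assume "u \<in> V1"
      then have "reach (D + {#(a,b)#}) u a" using assms(1,5) by (auto simp: connected_graph_def)
      then have "reach D u a \<or> reach D u b" using reach_add_edge by metis
      then show ?thesis using assms(3) ab reach_mono' reach_trans by metis
    next
      assume "u \<in> V2"
      then have "reach B u q" using assms(2,7) by (auto simp: connected_graph_def)
      then show ?thesis using assms(4,9) reach_mono' reach_trans by metis
    qed
  qed
qed

lemma comp_split:
  assumes A: "\<forall>e\<in>#A. fst e \<in> V1 \<and> snd e \<in> V1" and B: "\<forall>e\<in>#B. fst e \<in> V2 \<and> snd e \<in> V2"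
    and d: "V1 \<inter> V2 = {}" and v: "v \<in> V1"
  shows "component (V1 \<union> V2) (A + B) v = component V1 A v"
proof -
  have "reach (A + B) v u \<longleftrightarrow> reach A v u" for u
    using reach_split[OF A B d v] reach_mono'[of A "A+B"] by auto
  moreover have "reach A v u \<Longrightarrow> u \<in> V1" for u using reach_stay[OF A v] by blast
  ultimately show ?thesis unfolding component_def by auto
qed

lemma P7_part:
  assumes P: "P7_factor V1 E1 F1" and A: "\<forall>e\<in>#F1. fst e \<in> V1 \<and> snd e \<in> V1"
    and B: "\<forall>e\<in>#F2. fst e \<in> V2 \<and> snd e \<in> V2"
    and d: "V1 \<inter> V2 = {}" and v: "v \<in> V1"
  shows "\<exists>p. length p = 7 \<and> set p = component (V1 \<union> V2) (F1 + F2) v \<and>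
        is_path_on p (filter_mset (\<lambda>e. fst e \<in> component (V1 \<union> V2) (F1 + F2) v) (F1 + F2))"
proof -
  have c: "component (V1 \<union> V2) (F1 + F2) v = component V1 F1 v" by (rule comp_split[OF A B d v])
  have "component V1 F1 v \<subseteq> V1" by (auto simp: component_def)
  then have "filter_mset (\<lambda>e. fst e \<in> component V1 F1 v) F2 = {#}" using B d by fastforce
  then have f: "filter_mset (\<lambda>e. fst e \<in> component V1 F1 v) (F1 + F2) = filter_mset (\<lambda>e. fst e \<in> component V1 F1 v) F1"
    by simp
  from P v show ?thesis unfolding c f P7_factor_def by blast
qed

lemma P7_union:
  assumes P1: "P7_factor V1 E1 F1" and P2: "P7_factor V2 E2 F2"
    and A: "\<forall>e\<in>#F1. fst e \<in> V1 \<and> snd e \<in> V1"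
    and B: "\<forall>e\<in>#F2. fst e \<in> V2 \<and> snd e \<in> V2"
    and d: "V1 \<inter> V2 = {}" and s: "F1 + F2 \<subseteq># E"
  shows "P7_factor (V1 \<union> V2) E (F1 + F2)"
  unfolding P7_factor_def
proof (intro conjI ballI)
  show "F1 + F2 \<subseteq># E" by fact
  fix v assume "v \<in> V1 \<union> V2"
  then show "\<exists>p. length p = 7 \<and> set p = component (V1 \<union> V2) (F1 + F2) v \<and>
        is_path_on p (filter_mset (\<lambda>e. fst e \<in> component (V1 \<union> V2) (F1 + F2) v) (F1 + F2))"
  proof
    assume "v \<in> V1" then show ?thesis by (rule P7_part[OF P1 A B d])
  next
    assume "v \<in> V2"
    from P7_part[OF P2 B A _ this] d show ?thesis by (simp add: Un_commute add.commute Int_commute)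
  qed
qed

lemma deg_sum: "finite S \<Longrightarrow> (\<Sum>v\<in>S. deg M v) = size (filter_mset (\<lambda>e. fst e \<in> S) M) + size (filter_mset (\<lambda>e. snd e \<in> S) M)"
proof (induction M)
  case empty then show ?case by (simp add: deg_def)
next
  case (add e M)
  have "(\<Sum>v\<in>S. deg (add_mset e M) v) = (\<Sum>v\<in>S. deg M v) + (\<Sum>v\<in>S. (if fst e = v then 1 else 0)) + (\<Sum>v\<in>S. (if snd e = v then 1 else 0))"
    by (simp add: deg_add_mset sum.distrib)
  also have "\<dots> = (\<Sum>v\<in>S. deg M v) + (if fst e \<in> S then 1 else 0) + (if snd e \<in> S then 1 else 0)"
    using add.prems by simp
  finally show ?case using add by simp
qed

lemma deg_rep: "deg (replicate_mset n (a,b)) w = n * ((if a = w then 1 else 0) + (if b = w then 1 else 0))"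
  by (induction n) (auto simp: deg_add_mset deg_def)

lemma deg_out: "\<forall>e\<in>#M. fst e \<in> S \<and> snd e \<in> S \<Longrightarrow> w \<notin> S \<Longrightarrow> deg M w = 0"
  by (rule deg_zero) auto

lemma sub_diff: "F \<subseteq># E \<Longrightarrow> x \<in># E - F \<Longrightarrow> F \<subseteq># E - {#x#}"
  by (auto simp: subseteq_mset_def in_diff_count)

lemma diff_in2: "e \<in># A \<Longrightarrow> add_mset x (add_mset y (A + B)) - {#e#} = add_mset x (add_mset y ((A - {#e#}) + B))"
  by (auto simp: multiset_eq_iff)

lemma readd: "e \<in># E1 - {#e1#} \<Longrightarrow> e1 \<in># E1 \<Longrightarrow> (E1 - {#e1#} - {#e#}) + {#e1#} = E1 - {#e#}"
  by (auto simp: multiset_eq_iff in_diff_count)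

lemma sub1: "A \<subseteq># add_mset x (A + B)"
  by (simp add: subseteq_mset_def)
lemma sub2: "B \<subseteq># add_mset x (A + B)"
  by (simp add: subseteq_mset_def)
lemma sub3: "A \<subseteq># add_mset x (add_mset y (A + B))"
  by (simp add: subseteq_mset_def)
lemma sub4: "B \<subseteq># add_mset x (add_mset y (A + B))"
  by (simp add: subseteq_mset_def)

lemma filter_all: "(\<And>x. x \<in># M \<Longrightarrow> P x) \<Longrightarrow> filter_mset P M = M"
  by (induction M) auto

theorem mainTheorem3:
  fixes X1 Y1 X2 Y2 :: "'v set" and E1 E2 F1 F2 :: "('v \<times> 'v) multiset"
    and a1 b1 a2 b2 :: 'v
  assumes G1: "biregular34 X1 Y1 E1" "two_edge_connected (X1 \<union> Y1) E1"
    and G2: "biregular34 X2 Y2 E2" "two_edge_connected (X2 \<union> Y2) E2"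
    and disj: "(X1 \<union> Y1) \<inter> (X2 \<union> Y2) = {}"
    and F1: "P7_factor (X1 \<union> Y1) E1 F1"
    and F2: "P7_factor (X2 \<union> Y2) E2 F2"
    and e1: "a1 \<in> X1" "b1 \<in> Y1" "(a1, b1) \<in># E1 - F1"
    and e2: "a2 \<in> X2" "b2 \<in> Y2" "(a2, b2) \<in># E2 - F2"
    and no_full: "\<not> (\<exists>W H. full_3reg_subgraph X1 Y1 E1 W H)"
  shows "let X = X1 \<union> X2; Y = Y1 \<union> Y2;
             E = (E1 - {#(a1, b1)#}) + (E2 - {#(a2, b2)#}) + {#(a1, b2), (a2, b1)#}
         in biregular34 X Y E \<and> two_edge_connected (X \<union> Y) E \<and>
            (\<exists>F. P7_factor (X \<union> Y) E F) \<and>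
            \<not> (\<exists>W H. full_3reg_subgraph X Y E W H)"
proof -
  define E1' where "E1' = E1 - {#(a1, b1)#}"
  define E2' where "E2' = E2 - {#(a2, b2)#}"
  define E where "E = E1' + E2' + {#(a1, b2), (a2, b1)#}"
  define V1 where "V1 = X1 \<union> Y1"
  define V2 where "V2 = X2 \<union> Y2"
  have bg1: "finite X1" "finite Y1" "X1 \<inter> Y1 = {}" "\<forall>e\<in>#E1. fst e \<in> X1 \<and> snd e \<in> Y1"
    and dg1: "\<forall>x\<in>X1. deg E1 x = 3" "\<forall>y\<in>Y1. deg E1 y = 4"
    using G1(1) by (auto simp: biregular34_def is_bigraph_def)
  have bg2: "finite X2" "finite Y2" "X2 \<inter> Y2 = {}" "\<forall>e\<in>#E2. fst e \<in> X2 \<and> snd e \<in> Y2"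
    and dg2: "\<forall>x\<in>X2. deg E2 x = 3" "\<forall>y\<in>Y2. deg E2 y = 4"
    using G2(1) by (auto simp: biregular34_def is_bigraph_def)
  have d: "X1 \<inter> X2 = {}" "X1 \<inter> Y2 = {}" "Y1 \<inter> X2 = {}" "Y1 \<inter> Y2 = {}" "V1 \<inter> V2 = {}"
    using disj by (auto simp: V1_def V2_def)
  have e1in: "(a1, b1) \<in># E1" using e1(3) by (meson in_diffD)
  have e2in: "(a2, b2) \<in># E2" using e2(3) by (meson in_diffD)
  have ed1: "\<forall>e\<in>#E1'. fst e \<in> X1 \<and> snd e \<in> Y1" using bg1(4) by (auto simp: E1'_def dest: in_diffD)
  have ed2: "\<forall>e\<in>#E2'. fst e \<in> X2 \<and> snd e \<in> Y2" using bg2(4) by (auto simp: E2'_def dest: in_diffD)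
  have Eeq: "E = add_mset (a1, b2) (add_mset (a2, b1) (E1' + E2'))" by (simp add: E_def)
  have Eeq': "E = add_mset (a2, b1) (add_mset (a1, b2) (E1' + E2'))" by (simp add: E_def)
  have neq: "a1 \<noteq> a2" "b1 \<noteq> b2" "a1 \<noteq> b1" "a2 \<noteq> b2" "a1 \<noteq> b2" "a2 \<noteq> b1"
    using d e1 e2 bg1(3) bg2(3) by blast+
  have P1: "biregular34 (X1 \<union> X2) (Y1 \<union> Y2) E"
  proof -
    have ib: "is_bigraph (X1 \<union> X2) (Y1 \<union> Y2) E"
      unfolding is_bigraph_def using bg1 bg2 d e1 e2 ed1 ed2 by (auto simp: Eeq)
    have degE: "deg E v = deg E1' v + deg E2' v + (if a1 = v then 1 else 0) + (if b2 = v then 1 else 0)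
        + (if a2 = v then 1 else 0) + (if b1 = v then 1 else 0)" for v
      by (simp add: Eeq deg_add_mset deg_add)
    have dE1': "deg E1' v = deg E1 v - (if a1 = v then 1 else 0) - (if b1 = v then 1 else 0)" for v
      unfolding E1'_def using deg_diff[OF e1in] by simp
    have dE2': "deg E2' v = deg E2 v - (if a2 = v then 1 else 0) - (if b2 = v then 1 else 0)" for v
      unfolding E2'_def using deg_diff[OF e2in] by simp
    have z2: "deg E2 v = 0" if "v \<in> V1" for v using deg_out[of E2 "X2 \<union> Y2" v] bg2(4) d that V2_def by blast
    have z1: "deg E1 v = 0" if "v \<in> V2" for v using deg_out[of E1 "X1 \<union> Y1" v] bg1(4) d that V1_def by blast
    have dx: "deg E x = 3" if "x \<in> X1 \<union> X2" for x
    proof (cases "x \<in> X1")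
      case True
      then have "x \<noteq> b1" "x \<noteq> b2" "x \<noteq> a2" "x \<in> V1" using d bg1(3) e1 e2 V1_def by blast+
      then show ?thesis using degE[of x] dE1'[of x] dE2'[of x] z2 dg1 True
        by (cases "x = a1") auto
    next
      case False
      then have "x \<in> X2" "x \<noteq> b1" "x \<noteq> b2" "x \<noteq> a1" "x \<in> V2" using that d bg2(3) e1 e2 V2_def by blast+
      then show ?thesis using degE[of x] dE1'[of x] dE2'[of x] z1 dg2
        by (cases "x = a2") auto
    qed
    have dy: "deg E y = 4" if "y \<in> Y1 \<union> Y2" for y
    proof (cases "y \<in> Y1")
      case True
      then have "y \<noteq> a1" "y \<noteq> b2" "y \<noteq> a2" "y \<in> V1" using d bg1(3) e1 e2 V1_def by blast+
      then show ?thesis using degE[of y] dE1'[of y] dE2'[of y] z2 dg1 True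
        by (cases "y = b1") auto
    next
      case False
      then have "y \<in> Y2" "y \<noteq> b1" "y \<noteq> a2" "y \<noteq> a1" "y \<in> V2" using that d bg2(3) e1 e2 V2_def by blast+
      then show ?thesis using degE[of y] dE1'[of y] dE2'[of y] z1 dg2
        by (cases "y = b2") auto
    qed
    show ?thesis using ib dx dy by (simp add: biregular34_def)
  qed
  have c1: "connected_graph V1 (E1 - {#e#})" if "e \<in># E1" for e
    using G1(2) that by (auto simp: two_edge_connected_def V1_def)
  have c2: "connected_graph V2 (E2 - {#e#})" if "e \<in># E2" for e
    using G2(2) that by (auto simp: two_edge_connected_def V2_def)
  have c1': "connected_graph V1 E1'" using c1[OF e1in] by (simp add: E1'_def)
  have c2': "connected_graph V2 E2'" using c2[OF e2in] by (simp add: E2'_def)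
  have mem: "a1 \<in> V1" "b1 \<in> V1" "a2 \<in> V2" "b2 \<in> V2" using e1 e2 by (auto simp: V1_def V2_def)
  have conn0: "connected_graph (V1 \<union> V2) M" if "E1' \<subseteq># M" "E2' \<subseteq># M"
     "(a1, b2) \<in># M \<or> (a2, b1) \<in># M" for M
    using that(3)
  proof
    assume "(a1, b2) \<in># M"
    then have "reach M a1 b2" by (rule reach_edge)
    then show ?thesis by (rule conn_join[OF c1' c2' that(1,2) mem(1) mem(4)])
  next
    assume "(a2, b1) \<in># M"
    then have "reach M b1 a2" by (rule reach_edge')
    then show ?thesis by (rule conn_join[OF c1' c2' that(1,2) mem(2) mem(3)])
  qed
  have P2: "two_edge_connected (V1 \<union> V2) E"
    unfolding two_edge_connected_def
  proof (intro conjI ballI)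
    show "connected_graph (V1 \<union> V2) E" unfolding Eeq by (rule conn0) (simp_all add: sub1 sub2)
    fix e assume "e \<in># E"
    then have "e = (a1, b2) \<or> e = (a2, b1) \<or> e \<in># E1' \<or> e \<in># E2'" by (simp add: Eeq)
    then show "connected_graph (V1 \<union> V2) (E - {#e#})"
    proof (elim disjE)
      assume "e = (a1, b2)"
      then have "E - {#e#} = add_mset (a2, b1) (E1' + E2')" by (simp add: Eeq)
      then show ?thesis by simp (rule conn0, simp_all add: sub1 sub2)
    next
      assume "e = (a2, b1)"
      then have "E - {#e#} = add_mset (a1, b2) (E1' + E2')" by (simp add: Eeq')
      then show ?thesis by simp (rule conn0, simp_all add: sub1 sub2)
    next
      assume ee: "e \<in># E1'"
      have M: "E - {#e#} = add_mset (a1, b2) (add_mset (a2, b1) ((E1' - {#e#}) + E2'))"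
        unfolding Eeq by (rule diff_in2[OF ee])
      have ee1: "e \<in># E1" using ee by (auto simp: E1'_def dest: in_diffD)
      have "connected_graph V1 ((E1' - {#e#}) + {#(a1,b1)#})"
        using c1[OF ee1] readd[OF ee[unfolded E1'_def] e1in] by (simp add: E1'_def)
      from conn_key[OF this c2' _ _ mem(1) mem(4) mem(3), of "E - {#e#}"] show ?thesis
        unfolding M by (simp add: sub3 sub4 reach_edge reach_edge')
    next
      assume ee: "e \<in># E2'"
      have M: "E - {#e#} = add_mset (a1, b2) (add_mset (a2, b1) ((E2' - {#e#}) + E1'))"
        unfolding Eeq by (subst add.commute, rule diff_in2[OF ee])
      have ee2: "e \<in># E2" using ee by (auto simp: E2'_def dest: in_diffD)
      have "connected_graph V2 ((E2' - {#e#}) + {#(a2,b2)#})"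
        using c2[OF ee2] readd[OF ee[unfolded E2'_def] e2in] by (simp add: E2'_def)
      from conn_key[OF this c1' _ _ mem(3) mem(2) mem(1), of "E - {#e#}"] show ?thesis
        unfolding M by (simp add: sub3 sub4 reach_edge reach_edge' Un_commute)
    qed
  qed
  have F1s: "F1 \<subseteq># E1" using F1 by (simp add: P7_factor_def)
  have F2s: "F2 \<subseteq># E2" using F2 by (simp add: P7_factor_def)
  have F1s': "F1 \<subseteq># E1'" unfolding E1'_def by (rule sub_diff[OF F1s e1(3)])
  have F2s': "F2 \<subseteq># E2'" unfolding E2'_def by (rule sub_diff[OF F2s e2(3)])
  have "F1 + F2 \<subseteq># E1' + E2'" using F1s' F2s' by (rule subset_mset.add_mono)
  also have "E1' + E2' \<subseteq># E" by (simp add: Eeq subset_mset.le_add_same_cancel2)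
  finally have FE: "F1 + F2 \<subseteq># E" .
  have P3: "P7_factor (V1 \<union> V2) E (F1 + F2)"
  proof (rule P7_union[OF F1[folded V1_def] F2[folded V2_def] _ _ d(5) FE])
    show "\<forall>e\<in>#F1. fst e \<in> V1 \<and> snd e \<in> V1" using F1s bg1(4) V1_def by (auto dest: mset_subset_eqD)
    show "\<forall>e\<in>#F2. fst e \<in> V2 \<and> snd e \<in> V2" using F2s bg2(4) V2_def by (auto dest: mset_subset_eqD)
  qed
  have classE: "\<forall>e\<in>#E. (fst e \<in> X1 \<and> snd e \<in> Y1 \<and> e \<in># E1') \<or> (fst e \<in> X2 \<and> snd e \<in> Y2 \<and> e \<in># E2')
     \<or> e = (a1, b2) \<or> e = (a2, b1)"
    using ed1 ed2 by (auto simp: Eeq)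
  have P4: "\<not> (\<exists>W H. full_3reg_subgraph (X1 \<union> X2) (Y1 \<union> Y2) E W H)"
  proof
    assume "\<exists>W H. full_3reg_subgraph (X1 \<union> X2) (Y1 \<union> Y2) E W H"
    then obtain W H where "full_3reg_subgraph (X1 \<union> X2) (Y1 \<union> Y2) E W H" by blast
    then have fu: "W \<subseteq> X1 \<union> X2 \<union> (Y1 \<union> Y2)" "Y1 \<union> Y2 \<subseteq> W" "H \<subseteq># E"
      "\<forall>e\<in>#H. fst e \<in> W \<and> snd e \<in> W" "\<forall>w\<in>W. deg H w = 3"
      by (auto simp: full_3reg_subgraph_def)
    define P where "P = (\<lambda>e::'v\<times>'v. fst e \<in> V1 \<and> snd e \<in> V1)"
    define Q where "Q = (\<lambda>e::'v\<times>'v. fst e \<in> V2 \<and> snd e \<in> V2)"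
    define H1 where "H1 = filter_mset P H"
    define H2 where "H2 = filter_mset Q H"
    define s where "s = count H (a1, b2)"
    define t where "t = count H (a2, b1)"
    have HE: "e \<in># E" if "e \<in># H" for e using fu(3) that by (rule mset_subset_eqD)
    have V1X: "V1 = X1 \<union> Y1" "V2 = X2 \<union> Y2" by (simp_all add: V1_def V2_def)
    have nP: "\<not> P (a1, b2)" "\<not> P (a2, b1)" "\<not> Q (a1, b2)" "\<not> Q (a2, b1)"
      using mem d(5) by (auto simp: P_def Q_def)
    have PQ: "\<not> (P e \<and> Q e)" for e using d(5) by (auto simp: P_def Q_def)
    have classH: "P e \<or> Q e \<or> e = (a1, b2) \<or> e = (a2, b1)" if "e \<in># H" for e
      using classE HE[OF that] by (auto simp: P_def Q_def V1X)
    have Hdec: "H = H1 + H2 + replicate_mset s (a1, b2) + replicate_mset t (a2, b1)"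
      unfolding multiset_eq_iff
    proof
      fix z
      show "count H z = count (H1 + H2 + replicate_mset s (a1, b2) + replicate_mset t (a2, b1)) z"
      proof (cases "z \<in># H")
        case True
        then show ?thesis using classH[OF True] nP PQ[of z] neq
          by (auto simp: H1_def H2_def s_def t_def)
      next
        case False
        then have "count H z = 0" by (simp add: not_in_iff)
        then show ?thesis using False by (auto simp: H1_def H2_def s_def t_def)
      qed
    qed
    have H1e: "fst e \<in> W \<inter> X1 \<and> snd e \<in> Y1" if "e \<in># H1" for e
    proof -
      have eH: "e \<in># H" "P e" using that by (auto simp: H1_def)
      then show ?thesis using classE HE[OF eH(1)] fu(4) nP d(5) by (auto simp: P_def V1X)
    qed
    have H2e: "\<forall>e\<in>#H2. fst e \<in> V2 \<and> snd e \<in> V2" by (auto simp: H2_def Q_def)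
    have degH: "deg H w = deg H1 w + (if a1 = w then s else 0) + (if b1 = w then t else 0)" if "w \<in> V1" for w
    proof -
      have "deg H2 w = 0" using deg_out[OF H2e] that d(5) by blast
      moreover have "b2 \<noteq> w" "a2 \<noteq> w" using mem that d(5) by blast+
      ultimately show ?thesis
        by (subst Hdec) (simp add: deg_add deg_rep)
    qed
    have cE: "count E (a1, b2) = 1" "count E (a2, b1) = 1"
    proof -
      have "(a1, b2) \<notin># E1'" using ed1 e2(2) d(4) by (metis disjoint_iff snd_conv)
      moreover have "(a2, b1) \<notin># E1'" using ed1 e2(1) d(1) by (metis disjoint_iff fst_conv)
      moreover have "(a1, b2) \<notin># E2'" using ed2 e1(1) d(1) by (metis disjoint_iff fst_conv)
      moreover have "(a2, b1) \<notin># E2'" using ed2 e1(2) d(4) by (metis disjoint_iff snd_conv)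
      ultimately show "count E (a1, b2) = 1" "count E (a2, b1) = 1" using neq
        by (auto simp: Eeq not_in_iff)
    qed
    have st: "s \<le> 1" "t \<le> 1" using mset_subset_eq_count[OF fu(3)] cE by (metis s_def t_def)+
    have fY1: "finite Y1" by (rule bg1(2))
    have fS: "finite (W \<inter> X1)" using bg1(1) by simp
    have "(\<Sum>y\<in>Y1. deg H y) = (\<Sum>y\<in>Y1. (3::nat))" using fu(2,5) by (intro sum.cong) auto
    then have sumY: "(\<Sum>y\<in>Y1. deg H y) = 3 * card Y1" by simp
    have "(\<Sum>y\<in>Y1. deg H y) = (\<Sum>y\<in>Y1. deg H1 y + (if b1 = y then t else 0))"
    proof (rule sum.cong)
      fix y assume "y \<in> Y1"
      then have "y \<in> V1" "a1 \<noteq> y" using V1X bg1(3) e1 by blast+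
      then show "deg H y = deg H1 y + (if b1 = y then t else 0)" using degH by simp
    qed simp
    also have "\<dots> = size H1 + t"
    proof -
      have "filter_mset (\<lambda>e. fst e \<in> Y1) H1 = {#}" using H1e bg1(3) by fastforce
      moreover have "filter_mset (\<lambda>e. snd e \<in> Y1) H1 = H1" using H1e by (intro filter_all) blast
      ultimately show ?thesis using deg_sum[OF fY1, of H1] e1 fY1 by (simp add: sum.distrib)
    qed
    finally have eqY: "3 * card Y1 = size H1 + t" using sumY by simp
    have "(\<Sum>x\<in>W \<inter> X1. deg H x) = (\<Sum>x\<in>W \<inter> X1. (3::nat))" using fu(5) by (intro sum.cong) auto
    then have sumX: "(\<Sum>x\<in>W \<inter> X1. deg H x) = 3 * card (W \<inter> X1)" by simp
    have sa1: "s > 0 \<Longrightarrow> a1 \<in> W" using fu(4) by (auto simp: s_def)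
    have "(\<Sum>x\<in>W \<inter> X1. deg H x) = (\<Sum>x\<in>W \<inter> X1. deg H1 x + (if a1 = x then s else 0))"
    proof (rule sum.cong)
      fix x assume "x \<in> W \<inter> X1"
      then have "x \<in> V1" "b1 \<noteq> x" using V1X bg1(3) e1 by blast+
      then show "deg H x = deg H1 x + (if a1 = x then s else 0)" using degH by simp
    qed simp
    also have "\<dots> = size H1 + s"
    proof -
      have "filter_mset (\<lambda>e. snd e \<in> W \<inter> X1) H1 = {#}" using H1e bg1(3) by fastforce
      moreover have "filter_mset (\<lambda>e. fst e \<in> W \<inter> X1) H1 = H1" using H1e by (intro filter_all) blast
      moreover have "(\<Sum>x\<in>W \<inter> X1. (if a1 = x then s else 0)) = s" using sa1 e1 fS by auto
      ultimately show ?thesis using deg_sum[OF fS, of H1] by (simp add: sum.distrib)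
    qed
    finally have eqX: "3 * card (W \<inter> X1) = size H1 + s" using sumX by simp
    have seqt: "s = t" using eqX eqY st by presburger
    define H' where "H' = H1 + replicate_mset s (a1, b1)"
    have w1: "W \<inter> V1 \<subseteq> X1 \<union> Y1" by (simp add: V1X)
    have w2: "Y1 \<subseteq> W \<inter> V1" using fu(2) V1X by blast
    have fE: "filter_mset P E = E1'"
    proof -
      have "filter_mset P E1' = E1'" using ed1 by (intro filter_all) (auto simp: P_def V1X)
      moreover have "filter_mset P E2' = {#}" using ed2 d(5) by (fastforce simp: P_def V1X)
      ultimately show ?thesis using nP by (simp add: Eeq)
    qed
    have "H1 \<subseteq># E1'" unfolding H1_def fE[symmetric] using fu(3) by (rule multiset_filter_mono)
    moreover have "replicate_mset s (a1, b1) \<subseteq># {#(a1, b1)#}" using st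
      by (cases s) auto
    ultimately have "H' \<subseteq># E1' + {#(a1, b1)#}" unfolding H'_def by (rule subset_mset.add_mono)
    then have w3: "H' \<subseteq># E1" using e1in by (simp add: E1'_def)
    have w4: "\<forall>e\<in>#H'. fst e \<in> W \<inter> V1 \<and> snd e \<in> W \<inter> V1"
    proof
      fix e assume that: "e \<in># H'"
      show "fst e \<in> W \<inter> V1 \<and> snd e \<in> W \<inter> V1"
      proof (cases "e \<in># H1")
        case True then show ?thesis using H1e V1X fu(2) by blast
      next
        case False
        then have "e = (a1, b1)" "s > 0" using that by (auto simp: H'_def split: if_splits)
        then show ?thesis using sa1 mem fu(2) e1 by auto
      qed
    qed
    have w5: "\<forall>w\<in>W \<inter> V1. deg H' w = 3"
    proof
      fix w assume "w \<in> W \<inter> V1"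
      then have "deg H w = 3" "w \<in> V1" using fu(5) by auto
      then show "deg H' w = 3" using degH[of w] seqt neq(3) by (auto simp: H'_def deg_add deg_rep)
    qed
    have "full_3reg_subgraph X1 Y1 E1 (W \<inter> V1) H'"
      unfolding full_3reg_subgraph_def using w1 w2 w3 w4 w5 by blast
    then show False using no_full by blast
  qed
  have VV: "V1 \<union> V2 = (X1 \<union> X2) \<union> (Y1 \<union> Y2)" by (auto simp: V1_def V2_def)
  have Edef: "(E1 - {#(a1, b1)#}) + (E2 - {#(a2, b2)#}) + {#(a1, b2), (a2, b1)#} = E"
    by (simp add: E_def E1'_def E2'_def)
  show ?thesis unfolding Let_def Edef using P1 P2 P3 P4 unfolding VV by blast
qed

end
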